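(* Let $S\ge 2$, $m\ge 1$ and $n_1,\ldots,n_S\ge 1$ be integers, and put $n=\sum_{s=1}^S n_s$. Let $x_{sij}\in\mathbb{R}$ for $s=1,\ldots,S$, $i=1,\ldots,m$, $j=1,\ldots,n_s$. Let $\sigma_1^2,\ldots,\sigma_m^2>0$ and $\alpha_1,\ldots,\alpha_m>0$ be fixed constants. Consider the objective $$f(\mu,\gamma,d)=\sum_{i=1}^m\frac{1}{2\sigma_i^2}\Big(\sum_{j=1}^{n_1}(x_{1ij}-\mu_i-d_{1j})^2+\sum_{s=2}^S\sum_{j=1}^{n_s}(x_{sij}-\mu_i-\gamma_{si}-d_{sj})^2\Big)+\sum_{i=1}^m\alpha_i\,\mathbf{1}\Big(\sum_{s=2}^S|\gamma_{si}|>0\Big).$$ Here the variables are $\mu=(\mu_i)_{i=1}^m\in\mathbb{R}^m$, $\gamma=(\gamma_{si})_{2\le s\le S,\,1\le i\le m}$ with real entries, and $d=(d_{sj})_{1\le s\le S,\,1\le j\le n_s}$ with real entries. The objective $f$ is to be minimized subject to the constraint $d_{11}=0$. Define the following quantities: - for $s=1,\ldots,S$ and $j=1,\ldots,n_s$, $$d'_{sj}=\frac{\sum_{i=1}^m (x_{sij}-x_{si1})/\sigma_i^2}{\sum_{i=1}^m 1/\sigma_i^2};$$ - for $s=1,\ldots,S$ and $i=1,\ldots,m$, $$\mu'_{si}=\frac{1}{n_s}\sum_{j=1}^{n_s}(x_{sij}-d'_{sj}).$$ With the convention $d_1=0$, define for each $i$ the function of $(d_2,\ldots,d_S)\in\mathbb{R}^{S-1}$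 $$g_i(d_2,\ldots,d_S)=\frac{1}{2\sigma_i^2}\Big\{\sum_{s=1}^S n_s(\mu'_{si}-d_s)^2-\frac1n\Big[\sum_{s=1}^S n_s(\mu'_{si}-d_s)\Big]^2\Big\},$$ and put $$G(d_2,\ldots,d_S)=\sum_{i=1}^m\min\big(g_i(d_2,\ldots,d_S),\alpha_i\big).$$ Let $(d_2,\ldots,d_S)$ be any minimizer of $G$ over $\mathbb{R}^{S-1}$, and set $d_1=0$. Define: - $d_{sj}=d_s+d'_{sj}$ for all $s,j$; - for each $i$ with $g_i(d_2,\ldots,d_S)<\alpha_i$: $\gamma_{si}=0$ for $s=2,\ldots,S$, and $\mu_i=\frac1n\sum_{s=1}^S n_s(\mu'_{si}-d_s)$; - for each $i$ with $g_i(d_2,\ldots,d_S)\ge\alpha_i$: $\gamma_{si}=\mu'_{si}-\mu'_{1i}-d_s$ for $s=2,\ldots,S$, and $\mu_i=\mu'_{1i}$. Then the triple $(\mu,\gamma,d)$ so defined satisfies $d_{11}=0$ and is a global minimizer of $f$ among all $(\mu,\gamma,d)$ with $d_{11}=0$.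
   Context: This is the penalized (L0) negative log-likelihood for the model $x_{sij}\sim N(\mu_i+\gamma_{si}\mathbf 1(s\ge2)+d_{sj},\sigma_i^2)$ with known variances. $\mathbf{1}(\cdot)$ denotes the indicator function. *)

theory Defs
  imports Complex_Main
begin

(* Indices are 1-based: s \<in> {1..S}, i \<in> {1..m}, j \<in> {1..ns s}.
   sig2 i is the variance sigma_i^2.  Vectors are functions on nat; only the
   values at indices in range matter. *)

definition obj :: "nat \<Rightarrow> nat \<Rightarrow> (nat \<Rightarrow> nat) \<Rightarrow> (nat \<Rightarrow> nat \<Rightarrow> nat \<Rightarrow> real)
   \<Rightarrow> (nat \<Rightarrow> real) \<Rightarrow> (nat \<Rightarrow> real)
   \<Rightarrow> (nat \<Rightarrow> real) \<Rightarrow> (nat \<Rightarrow> nat \<Rightarrow> real) \<Rightarrow> (nat \<Rightarrow> nat \<Rightarrow> real) \<Rightarrow> real" where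
  "obj S m ns x sig2 alpha mu gam d =
     (\<Sum>i=1..m. 1 / (2 * sig2 i) *
        ((\<Sum>j=1..ns 1. (x 1 i j - mu i - d 1 j)\<^sup>2)
         + (\<Sum>s=2..S. \<Sum>j=1..ns s. (x s i j - mu i - gam s i - d s j)\<^sup>2)))
   + (\<Sum>i=1..m. alpha i * (if (\<Sum>s=2..S. \<bar>gam s i\<bar>) > 0 then 1 else 0))"

definition dprime :: "nat \<Rightarrow> (nat \<Rightarrow> nat \<Rightarrow> nat \<Rightarrow> real) \<Rightarrow> (nat \<Rightarrow> real) \<Rightarrow> nat \<Rightarrow> nat \<Rightarrow> real" where
  "dprime m x sig2 s j =
     (\<Sum>i=1..m. (x s i j - x s i 1) / sig2 i) / (\<Sum>i=1..m. 1 / sig2 i)"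

definition muprime :: "nat \<Rightarrow> (nat \<Rightarrow> nat) \<Rightarrow> (nat \<Rightarrow> nat \<Rightarrow> nat \<Rightarrow> real) \<Rightarrow> (nat \<Rightarrow> real)
   \<Rightarrow> nat \<Rightarrow> nat \<Rightarrow> real" where
  "muprime m ns x sig2 s i =
     (1 / real (ns s)) * (\<Sum>j=1..ns s. x s i j - dprime m x sig2 s j)"

(* g_i evaluated at D, where D s = d_s for s = 2..S; the convention d_1 = 0 is imposed
   by using D 1 = 0 in the statement. *)
definition gfun :: "nat \<Rightarrow> nat \<Rightarrow> (nat \<Rightarrow> nat) \<Rightarrow> (nat \<Rightarrow> nat \<Rightarrow> nat \<Rightarrow> real) \<Rightarrow> (nat \<Rightarrow> real)
   \<Rightarrow> nat \<Rightarrow> (nat \<Rightarrow> real) \<Rightarrow> real" where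
  "gfun S m ns x sig2 i D =
     1 / (2 * sig2 i) *
       ((\<Sum>s=1..S. real (ns s) * (muprime m ns x sig2 s i - D s)\<^sup>2)
        - (1 / real (\<Sum>s=1..S. ns s)) *
            (\<Sum>s=1..S. real (ns s) * (muprime m ns x sig2 s i - D s))\<^sup>2)"

definition Gfun :: "nat \<Rightarrow> nat \<Rightarrow> (nat \<Rightarrow> nat) \<Rightarrow> (nat \<Rightarrow> nat \<Rightarrow> nat \<Rightarrow> real) \<Rightarrow> (nat \<Rightarrow> real)
   \<Rightarrow> (nat \<Rightarrow> real) \<Rightarrow> (nat \<Rightarrow> real) \<Rightarrow> real" where
  "Gfun S m ns x sig2 alpha D = (\<Sum>i=1..m. min (gfun S m ns x sig2 i D) (alpha i))"

end

theory Submission imports Defs begin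

lemma decomp_gen:
  fixes w :: "nat \<Rightarrow> real" and X :: "nat \<Rightarrow> nat \<Rightarrow> real" and a dd dp mp :: "nat \<Rightarrow> real" and N :: nat
  assumes N: "N \<ge> 1"
    and dp: "\<And>j. (\<Sum>i=1..m. w i) * dp j = (\<Sum>i=1..m. w i * (X i j - X i 1))"
    and mp: "\<And>i. real N * mp i = (\<Sum>j=1..N. X i j - dp j)"
    and eb: "real N * eb = (\<Sum>j=1..N. dd j - dp j)"
  shows "(\<Sum>i=1..m. w i * (\<Sum>j=1..N. (X i j - a i - dd j)^2)) =
     (\<Sum>i=1..m. w i * (\<Sum>j=1..N. (X i j - mp i - dp j)^2))
   + (\<Sum>i=1..m. w i * real N * (mp i - a i - eb)^2)
   + (\<Sum>i=1..m. w i) * (\<Sum>j=1..N. (dd j - dp j - eb)^2)"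
proof -
  define e where "e i j = X i j - mp i - dp j" for i j
  define r where "r i = mp i - a i - eb" for i
  define c where "c j = dd j - dp j - eb" for j
  define K where "K = (\<Sum>i=1..m. w i * X i 1) - (\<Sum>i=1..m. w i * mp i)"
  have e1: "(\<Sum>j=1..N. e i j) = 0" for i
  proof -
    have "(\<Sum>j=1..N. e i j) = (\<Sum>j=1..N. (X i j - dp j) - mp i)"
      unfolding e_def by (simp add: algebra_simps)
    also have "\<dots> = (\<Sum>j=1..N. X i j - dp j) - (\<Sum>j=1..N. mp i)"
      by (rule sum_subtractf)
    also have "\<dots> = 0" using mp[of i] by simp
    finally show ?thesis .
  qed
  have c0: "(\<Sum>j=1..N. c j) = 0"
  proof -
    have "(\<Sum>j=1..N. c j) = (\<Sum>j=1..N. (dd j - dp j) - eb)"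
      unfolding c_def by (simp add: algebra_simps)
    also have "\<dots> = (\<Sum>j=1..N. dd j - dp j) - (\<Sum>j=1..N. eb)"
      by (rule sum_subtractf)
    also have "\<dots> = 0" using eb by simp
    finally show ?thesis .
  qed
  have e3: "(\<Sum>i=1..m. w i * e i j) = K" for j
  proof -
    have "(\<Sum>i=1..m. w i * e i j) = (\<Sum>i=1..m. w i * X i j) - (\<Sum>i=1..m. w i * mp i) - (\<Sum>i=1..m. w i) * dp j"
    proof -
      have "(\<Sum>i=1..m. w i * e i j) = (\<Sum>i=1..m. (w i * X i j - w i * mp i) - w i * dp j)"
        unfolding e_def by (simp add: algebra_simps)
      also have "\<dots> = (\<Sum>i=1..m. w i * X i j - w i * mp i) - (\<Sum>i=1..m. w i * dp j)"
        by (rule sum_subtractf)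
      also have "\<dots> = (\<Sum>i=1..m. w i * X i j) - (\<Sum>i=1..m. w i * mp i) - (\<Sum>i=1..m. w i) * dp j"
        by (simp add: sum_subtractf sum_distrib_right)
      finally show ?thesis .
    qed
    also have "(\<Sum>i=1..m. w i) * dp j = (\<Sum>i=1..m. w i * X i j) - (\<Sum>i=1..m. w i * X i 1)"
      using dp[of j] by (simp add: sum_subtractf[symmetric] algebra_simps)
    finally show ?thesis unfolding K_def by simp
  qed
  have inner: "(\<Sum>j=1..N. (X i j - a i - dd j)^2) =
      (\<Sum>j=1..N. (e i j)^2) + real N * (r i)^2 + (\<Sum>j=1..N. (c j)^2) - 2 * (\<Sum>j=1..N. e i j * c j)" for i
  proof -
    have "(\<Sum>j=1..N. (X i j - a i - dd j)^2) =
       (\<Sum>j=1..N. (e i j)^2 + (r i)^2 + (c j)^2 + 2 * r i * e i j - 2 * (e i j * c j) - 2 * r i * c j)"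
      by (rule sum.cong) (auto simp: e_def r_def c_def power2_eq_square algebra_simps)
    also have "\<dots> = (\<Sum>j=1..N. (e i j)^2) + real N * (r i)^2 + (\<Sum>j=1..N. (c j)^2)
        + 2 * r i * (\<Sum>j=1..N. e i j) - 2 * (\<Sum>j=1..N. e i j * c j) - 2 * r i * (\<Sum>j=1..N. c j)"
      by (simp add: sum.distrib sum_subtractf sum_distrib_left)
    finally show ?thesis using e1[of i] c0 by simp
  qed
  have cross: "(\<Sum>i=1..m. w i * (\<Sum>j=1..N. e i j * c j)) = 0"
  proof -
    have "(\<Sum>i=1..m. w i * (\<Sum>j=1..N. e i j * c j)) = (\<Sum>j=1..N. c j * (\<Sum>i=1..m. w i * e i j))"
      by (simp add: sum_distrib_left algebra_simps) (rule sum.swap)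
    also have "\<dots> = (\<Sum>j=1..N. c j * K)" using e3 by simp
    also have "\<dots> = 0" using c0 by (simp add: sum_distrib_right[symmetric])
    finally show ?thesis .
  qed
  have "(\<Sum>i=1..m. w i * (\<Sum>j=1..N. (X i j - a i - dd j)^2)) =
     (\<Sum>i=1..m. w i * (\<Sum>j=1..N. (e i j)^2) + w i * real N * (r i)^2 + w i * (\<Sum>j=1..N. (c j)^2)
        - 2 * (w i * (\<Sum>j=1..N. e i j * c j)))"
    unfolding inner by (rule sum.cong) (auto simp: algebra_simps)
  also have "\<dots> = (\<Sum>i=1..m. w i * (\<Sum>j=1..N. (e i j)^2)) + (\<Sum>i=1..m. w i * real N * (r i)^2)
      + (\<Sum>i=1..m. w i) * (\<Sum>j=1..N. (c j)^2) - 2 * (\<Sum>i=1..m. w i * (\<Sum>j=1..N. e i j * c j))"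
    by (simp only: sum.distrib sum_subtractf sum_distrib_right[symmetric] sum_distrib_left[symmetric])
  finally show ?thesis using cross unfolding e_def r_def c_def by simp
qed

lemma var_bound:
  fixes c y :: "nat \<Rightarrow> real" and A :: "nat set"
  assumes N: "(\<Sum>s\<in>A. c s) > 0"
  shows "(\<Sum>s\<in>A. c s * (y s - v)^2) \<ge> (\<Sum>s\<in>A. c s * (y s)^2) - (1 / (\<Sum>s\<in>A. c s)) * (\<Sum>s\<in>A. c s * y s)^2"
    and "v = (1 / (\<Sum>s\<in>A. c s)) * (\<Sum>s\<in>A. c s * y s) \<Longrightarrow>
      (\<Sum>s\<in>A. c s * (y s - v)^2) = (\<Sum>s\<in>A. c s * (y s)^2) - (1 / (\<Sum>s\<in>A. c s)) * (\<Sum>s\<in>A. c s * y s)^2"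
proof -
  define T where "T = (\<Sum>s\<in>A. c s)"
  define B where "B = (\<Sum>s\<in>A. c s * y s)"
  have ex: "(\<Sum>s\<in>A. c s * (y s - v)^2) = (\<Sum>s\<in>A. c s * (y s)^2) - 2 * v * B + T * v^2"
  proof -
    have "(\<Sum>s\<in>A. c s * (y s - v)^2) = (\<Sum>s\<in>A. c s * (y s)^2 - 2 * v * (c s * y s) + v^2 * c s)"
      by (rule sum.cong) (auto simp: power2_eq_square algebra_simps)
    also have "\<dots> = (\<Sum>s\<in>A. c s * (y s)^2) - 2 * v * B + T * v^2"
      by (simp add: sum.distrib sum_subtractf sum_distrib_left sum_distrib_right[symmetric] B_def T_def algebra_simps)
    finally show ?thesis .
  qed
  have T: "T > 0" using N T_def by simp
  have key: "- 2 * v * B + T * v^2 = (T * v - B)^2 / T - B^2 / T"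
    using T by (simp add: field_simps power2_eq_square)
  show "(\<Sum>s\<in>A. c s * (y s - v)^2) \<ge> (\<Sum>s\<in>A. c s * (y s)^2) - (1 / (\<Sum>s\<in>A. c s)) * (\<Sum>s\<in>A. c s * y s)^2"
    using ex key T unfolding T_def[symmetric] B_def[symmetric] by simp
  assume v: "v = (1 / (\<Sum>s\<in>A. c s)) * (\<Sum>s\<in>A. c s * y s)"
  then have "T * v - B = 0" using T by (simp add: T_def B_def)
  then show "(\<Sum>s\<in>A. c s * (y s - v)^2) = (\<Sum>s\<in>A. c s * (y s)^2) - (1 / (\<Sum>s\<in>A. c s)) * (\<Sum>s\<in>A. c s * y s)^2"
    using ex key unfolding T_def[symmetric] B_def[symmetric] by simp
qed

definition ebf where "ebf m ns x sig2 d s = (\<Sum>j=1..ns s. d s j - dprime m x sig2 s j) / real (ns s)"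
definition Ef where "Ef S m ns x sig2 = (\<Sum>s=1..S. \<Sum>i=1..m. (1/sig2 i) * (\<Sum>j=1..ns s. (x s i j - muprime m ns x sig2 s i - dprime m x sig2 s j)^2))"
definition Cf where "Cf S m ns x sig2 d = (\<Sum>s=1..S. (\<Sum>i=1..m. 1/sig2 i) * (\<Sum>j=1..ns s. (d s j - dprime m x sig2 s j - ebf m ns x sig2 d s)^2))"
definition termf where "termf S m ns x sig2 alpha mu gam d i = 1/(2*sig2 i) * (\<Sum>s=1..S. real(ns s) * (muprime m ns x sig2 s i - (mu i + (if s = 1 then 0 else gam s i)) - ebf m ns x sig2 d s)^2) + alpha i * (if (\<Sum>s=2..S. \<bar>gam s i\<bar>) > 0 then 1 else 0)"

lemma objdecomp:
  fixes S m :: nat and ns :: "nat \<Rightarrow> nat" and x :: "nat \<Rightarrow> nat \<Rightarrow> nat \<Rightarrow> real"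
    and sig2 alpha :: "nat \<Rightarrow> real"
  assumes hS: "S \<ge> 1" and hm: "m \<ge> 1"
    and hns: "\<forall>s\<in>{1..S}. ns s \<ge> 1"
    and hsig: "\<forall>i\<in>{1..m}. sig2 i > 0"
  shows "obj S m ns x sig2 alpha mu gam d = (1/2) * Ef S m ns x sig2 + (1/2) * Cf S m ns x sig2 d
     + (\<Sum>i=1..m. termf S m ns x sig2 alpha mu gam d i)"
proof -
  define a where "a s i = mu i + (if s = 1 then 0 else gam s i)" for s i
  define W where "W = (\<Sum>i=1..m. 1 / sig2 i)"
  have Wpos: "W > 0" unfolding W_def
    using hm hsig by (intro sum_pos) auto
  have per_s: "(\<Sum>i=1..m. (1/sig2 i) * (\<Sum>j=1..ns s. (x s i j - a s i - d s j)^2)) =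
      (\<Sum>i=1..m. (1/sig2 i) * (\<Sum>j=1..ns s. (x s i j - muprime m ns x sig2 s i - dprime m x sig2 s j)^2))
    + (\<Sum>i=1..m. (1/sig2 i) * real (ns s) * (muprime m ns x sig2 s i - a s i - ebf m ns x sig2 d s)^2)
    + W * (\<Sum>j=1..ns s. (d s j - dprime m x sig2 s j - ebf m ns x sig2 d s)^2)"
    if s: "s \<in> {1..S}" for s
  proof -
    have N: "ns s \<ge> 1" using hns s by auto
    show ?thesis unfolding W_def
    proof (rule decomp_gen[OF N])
      fix j
      have "(\<Sum>i=1..m. 1 / sig2 i) * dprime m x sig2 s j = (\<Sum>i=1..m. (x s i j - x s i 1) / sig2 i)"
        using Wpos unfolding dprime_def W_def by simp
      then show "(\<Sum>i=1..m. 1 / sig2 i) * dprime m x sig2 s j = (\<Sum>i=1..m. 1 / sig2 i * (x s i j - x s i 1))"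
        by simp
    next
      fix i
      show "real (ns s) * muprime m ns x sig2 s i = (\<Sum>j=1..ns s. x s i j - dprime m x sig2 s j)"
        using N unfolding muprime_def by simp
    next
      show "real (ns s) * ebf m ns x sig2 d s = (\<Sum>j=1..ns s. d s j - dprime m x sig2 s j)"
        using N unfolding ebf_def by simp
    qed
  qed
  have split_i: "(\<Sum>j=1..ns 1. (x 1 i j - mu i - d 1 j)\<^sup>2)
         + (\<Sum>s=2..S. \<Sum>j=1..ns s. (x s i j - mu i - gam s i - d s j)\<^sup>2)
       = (\<Sum>s=1..S. \<Sum>j=1..ns s. (x s i j - a s i - d s j)^2)" for i
  proof -
    have "(\<Sum>s=1..S. \<Sum>j=1..ns s. (x s i j - a s i - d s j)^2)
        = (\<Sum>j=1..ns 1. (x 1 i j - a 1 i - d 1 j)^2) + (\<Sum>s=Suc 1..S. \<Sum>j=1..ns s. (x s i j - a s i - d s j)^2)"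
      using hS by (rule sum.atLeast_Suc_atMost)
    also have "(\<Sum>s=Suc 1..S. \<Sum>j=1..ns s. (x s i j - a s i - d s j)^2)
        = (\<Sum>s=2..S. \<Sum>j=1..ns s. (x s i j - mu i - gam s i - d s j)\<^sup>2)"
      by (rule sum.cong) (auto simp: a_def algebra_simps)
    finally show ?thesis by (simp add: a_def)
  qed
  have quad: "(\<Sum>i=1..m. 1 / (2 * sig2 i) *
        ((\<Sum>j=1..ns 1. (x 1 i j - mu i - d 1 j)\<^sup>2)
         + (\<Sum>s=2..S. \<Sum>j=1..ns s. (x s i j - mu i - gam s i - d s j)\<^sup>2)))
      = (1/2) * (\<Sum>s=1..S. \<Sum>i=1..m. (1/sig2 i) * (\<Sum>j=1..ns s. (x s i j - a s i - d s j)^2))"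
  proof -
    have "(\<Sum>i=1..m. 1 / (2 * sig2 i) *
        ((\<Sum>j=1..ns 1. (x 1 i j - mu i - d 1 j)\<^sup>2)
         + (\<Sum>s=2..S. \<Sum>j=1..ns s. (x s i j - mu i - gam s i - d s j)\<^sup>2)))
      = (\<Sum>i=1..m. (1/2) * (\<Sum>s=1..S. (1/sig2 i) * (\<Sum>j=1..ns s. (x s i j - a s i - d s j)^2)))"
      unfolding split_i by (rule sum.cong) (auto simp: sum_distrib_left)
    also have "\<dots> = (1/2) * (\<Sum>i=1..m. \<Sum>s=1..S. (1/sig2 i) * (\<Sum>j=1..ns s. (x s i j - a s i - d s j)^2))"
      by (simp add: sum_distrib_left)
    also have "(\<Sum>i=1..m. \<Sum>s=1..S. (1/sig2 i) * (\<Sum>j=1..ns s. (x s i j - a s i - d s j)^2))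
        = (\<Sum>s=1..S. \<Sum>i=1..m. (1/sig2 i) * (\<Sum>j=1..ns s. (x s i j - a s i - d s j)^2))"
      by (rule sum.swap)
    finally show ?thesis .
  qed
  have mid: "(\<Sum>s=1..S. \<Sum>i=1..m. (1/sig2 i) * real (ns s) * (muprime m ns x sig2 s i - a s i - ebf m ns x sig2 d s)^2)
     = (\<Sum>i=1..m. (1/sig2 i) * (\<Sum>s=1..S. real (ns s) * (muprime m ns x sig2 s i - a s i - ebf m ns x sig2 d s)^2))"
    by (subst sum.swap) (simp add: sum_distrib_left mult.assoc)
  have "(\<Sum>s=1..S. \<Sum>i=1..m. (1/sig2 i) * (\<Sum>j=1..ns s. (x s i j - a s i - d s j)^2))
      = Ef S m ns x sig2 + (\<Sum>s=1..S. \<Sum>i=1..m. (1/sig2 i) * real (ns s) * (muprime m ns x sig2 s i - a s i - ebf m ns x sig2 d s)^2)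
        + Cf S m ns x sig2 d"
    unfolding Ef_def Cf_def W_def[symmetric]
    by (subst sum.cong[OF refl per_s], assumption) (simp only: sum.distrib)
  then have q2: "(\<Sum>i=1..m. 1 / (2 * sig2 i) *
        ((\<Sum>j=1..ns 1. (x 1 i j - mu i - d 1 j)\<^sup>2)
         + (\<Sum>s=2..S. \<Sum>j=1..ns s. (x s i j - mu i - gam s i - d s j)\<^sup>2)))
     = (1/2) * Ef S m ns x sig2 + (1/2) * Cf S m ns x sig2 d
       + (\<Sum>i=1..m. 1/(2*sig2 i) * (\<Sum>s=1..S. real (ns s) * (muprime m ns x sig2 s i - a s i - ebf m ns x sig2 d s)^2))"
    unfolding quad mid by (simp add: algebra_simps sum_distrib_left)
  show ?thesis unfolding obj_def q2 termf_def sum.distrib a_def by simp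
qed

lemma gfun_alt: "gfun S m ns x sig2 i Dv = 1 / (2 * sig2 i) *
   ((\<Sum>s=1..S. real (ns s) * (muprime m ns x sig2 s i - Dv s)^2)
    - (1 / (\<Sum>s=1..S. real (ns s))) * (\<Sum>s=1..S. real (ns s) * (muprime m ns x sig2 s i - Dv s))^2)"
  unfolding gfun_def by (simp add: of_nat_sum)

lemma npos: fixes S :: nat assumes "S \<ge> 1" "\<forall>s\<in>{1..S}. ns s \<ge> 1" shows "(\<Sum>s=1..S. real (ns s)) > 0"
proof -
  have "(\<Sum>s=1..S. real (ns s)) \<ge> (\<Sum>s=1..S. 1)" using assms(2) by (intro sum_mono) auto
  moreover have "(\<Sum>s=1..S. (1::real)) = real S" by simp
  ultimately show ?thesis using assms(1) by linarith
qed

lemma term_lower: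
  fixes m :: nat and x :: "nat \<Rightarrow> nat \<Rightarrow> nat \<Rightarrow> real" and d :: "nat \<Rightarrow> nat \<Rightarrow> real"
  assumes hS: "S \<ge> 1" and hns: "\<forall>s\<in>{1..S}. ns s \<ge> 1"
    and si: "sig2 i > 0" and ai: "alpha i > 0"
  defines "Dst \<equiv> (\<lambda>s. ebf m ns x sig2 d s - ebf m ns x sig2 d 1)"
  shows "termf S m ns x sig2 alpha mu gam d i \<ge> min (gfun S m ns x sig2 i Dst) (alpha i)"
proof (cases "(\<Sum>s=2..S. \<bar>gam s i\<bar>) > 0")
  case True
  have "0 \<le> 1/(2*sig2 i) * (\<Sum>s=1..S. real(ns s) * (muprime m ns x sig2 s i - (mu i + (if s = 1 then 0 else gam s i)) - ebf m ns x sig2 d s)^2)"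
    using si by (intro mult_nonneg_nonneg sum_nonneg) auto
  then have "termf S m ns x sig2 alpha mu gam d i \<ge> alpha i"
    unfolding termf_def using True by simp
  then show ?thesis by linarith
next
  case False
  have "(\<Sum>s=2..S. \<bar>gam s i\<bar>) = 0" using False by (simp add: not_less sum_nonneg antisym)
  then have g0: "\<forall>s\<in>{2..S}. gam s i = 0"
    by (subst (asm) sum_nonneg_eq_0_iff) auto
  define v where "v = mu i + ebf m ns x sig2 d 1"
  have eq: "(\<Sum>s=1..S. real(ns s) * (muprime m ns x sig2 s i - (mu i + (if s = 1 then 0 else gam s i)) - ebf m ns x sig2 d s)^2)
     = (\<Sum>s=1..S. real(ns s) * ((muprime m ns x sig2 s i - Dst s) - v)^2)"
  proof (rule sum.cong)
    fix s assume s: "s \<in> {1..S}"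
    show "real(ns s) * (muprime m ns x sig2 s i - (mu i + (if s = 1 then 0 else gam s i)) - ebf m ns x sig2 d s)^2
      = real(ns s) * ((muprime m ns x sig2 s i - Dst s) - v)^2"
    proof (cases "s = 1")
      case True then show ?thesis by (simp add: Dst_def v_def algebra_simps)
    next
      case False then have "gam s i = 0" using g0 s by auto
      then show ?thesis using False by (simp add: Dst_def v_def algebra_simps)
    qed
  qed simp
  have vb: "(\<Sum>s=1..S. real(ns s) * ((muprime m ns x sig2 s i - Dst s) - v)^2) \<ge>
     (\<Sum>s=1..S. real (ns s) * (muprime m ns x sig2 s i - Dst s)^2)
    - (1 / (\<Sum>s=1..S. real (ns s))) * (\<Sum>s=1..S. real (ns s) * (muprime m ns x sig2 s i - Dst s))^2"
    by (rule var_bound(1)[OF npos[OF hS hns]])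
  have "termf S m ns x sig2 alpha mu gam d i = 1/(2*sig2 i) * (\<Sum>s=1..S. real(ns s) * ((muprime m ns x sig2 s i - Dst s) - v)^2)"
    unfolding termf_def eq using False by simp
  also have "\<dots> \<ge> gfun S m ns x sig2 i Dst"
    unfolding gfun_alt using vb si by (intro mult_left_mono) auto
  finally show ?thesis by linarith
qed

lemma term_hat:
  fixes m :: nat and x :: "nat \<Rightarrow> nat \<Rightarrow> nat \<Rightarrow> real" and D :: "nat \<Rightarrow> real"
  assumes hS: "S \<ge> 1" and hns: "\<forall>s\<in>{1..S}. ns s \<ge> 1"
    and si: "sig2 i > 0" and ai: "alpha i > 0" and hD1: "D 1 = 0"
  defines "n \<equiv> (\<Sum>s=1..S. ns s)"
  defines "dhat \<equiv> (\<lambda>s j. D s + dprime m x sig2 s j)"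
  defines "ghat \<equiv> (\<lambda>s i. if gfun S m ns x sig2 i D < alpha i then 0
                         else muprime m ns x sig2 s i - muprime m ns x sig2 1 i - D s)"
  defines "muhat \<equiv> (\<lambda>i. if gfun S m ns x sig2 i D < alpha i
                         then (1 / real n) * (\<Sum>s=1..S. real (ns s) * (muprime m ns x sig2 s i - D s))
                         else muprime m ns x sig2 1 i)"
  shows "termf S m ns x sig2 alpha muhat ghat dhat i \<le> min (gfun S m ns x sig2 i D) (alpha i)"
proof -
  have eb: "ebf m ns x sig2 dhat s = D s" if "s \<in> {1..S}" for s
  proof -
    have "ns s \<ge> 1" using hns that by auto
    then show ?thesis unfolding ebf_def dhat_def by simp
  qed
  have sumeq: "(\<Sum>s=1..S. real(ns s) * (muprime m ns x sig2 s i - (muhat i + (if s = 1 then 0 else ghat s i)) - ebf m ns x sig2 dhat s)^2)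
     = (\<Sum>s=1..S. real(ns s) * ((muprime m ns x sig2 s i - D s) - (muhat i + (if s = 1 then 0 else ghat s i)))^2)"
    by (rule sum.cong) (auto simp: eb algebra_simps)
  show ?thesis
  proof (cases "gfun S m ns x sig2 i D < alpha i")
    case True
    have mh: "muhat i = (1 / (\<Sum>s=1..S. real (ns s))) * (\<Sum>s=1..S. real (ns s) * (muprime m ns x sig2 s i - D s))"
      using True unfolding muhat_def n_def by (simp add: of_nat_sum)
    have gh: "\<And>s. ghat s i = 0" using True unfolding ghat_def by simp
    have q: "(\<Sum>s=1..S. real(ns s) * ((muprime m ns x sig2 s i - D s) - (muhat i + (if s = 1 then 0 else ghat s i)))^2)
      = (\<Sum>s=1..S. real(ns s) * ((muprime m ns x sig2 s i - D s) - muhat i)^2)"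
      by (rule sum.cong) (auto simp: gh)
    have "termf S m ns x sig2 alpha muhat ghat dhat i = gfun S m ns x sig2 i D"
      unfolding termf_def sumeq q gfun_alt using var_bound(2)[OF npos[OF hS hns] mh] by (simp add: gh)
    then show ?thesis using True by simp
  next
    case False
    have hD1': "D (Suc 0) = 0" using hD1 by simp
    have mh: "muhat i = muprime m ns x sig2 1 i" using False unfolding muhat_def by simp
    have q: "(\<Sum>s=1..S. real(ns s) * ((muprime m ns x sig2 s i - D s) - (muhat i + (if s = 1 then 0 else ghat s i)))^2)
      = 0"
      using False by (intro sum.neutral) (auto simp: mh ghat_def hD1')
    have "termf S m ns x sig2 alpha muhat ghat dhat i \<le> alpha i"
      unfolding termf_def sumeq q using ai by simp
    then show ?thesis using False by simp
  qed
qed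

lemma Cf_nonneg: assumes "\<forall>i\<in>{1..m}. sig2 i > 0" shows "Cf S m ns x sig2 d \<ge> 0"
  unfolding Cf_def using assms
  by (intro sum_nonneg mult_nonneg_nonneg) (auto intro: sum_nonneg less_imp_le)

theorem proposition1:
  fixes S m :: nat and ns :: "nat \<Rightarrow> nat" and x :: "nat \<Rightarrow> nat \<Rightarrow> nat \<Rightarrow> real"
    and sig2 alpha :: "nat \<Rightarrow> real" and D :: "nat \<Rightarrow> real"
  assumes hS: "S \<ge> 2" and hm: "m \<ge> 1"
    and hns: "\<forall>s\<in>{1..S}. ns s \<ge> 1"
    and hsig: "\<forall>i\<in>{1..m}. sig2 i > 0"
    and halpha: "\<forall>i\<in>{1..m}. alpha i > 0"
    and hD1: "D 1 = 0"
    and hDmin: "\<forall>D'. D' 1 = 0 \<longrightarrow> Gfun S m ns x sig2 alpha D \<le> Gfun S m ns x sig2 alpha D'"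
  defines "n \<equiv> (\<Sum>s=1..S. ns s)"
  defines "dhat \<equiv> (\<lambda>s j. D s + dprime m x sig2 s j)"
  defines "ghat \<equiv> (\<lambda>s i. if gfun S m ns x sig2 i D < alpha i then 0
                         else muprime m ns x sig2 s i - muprime m ns x sig2 1 i - D s)"
  defines "muhat \<equiv> (\<lambda>i. if gfun S m ns x sig2 i D < alpha i
                         then (1 / real n) * (\<Sum>s=1..S. real (ns s) * (muprime m ns x sig2 s i - D s))
                         else muprime m ns x sig2 1 i)"
  shows "dhat 1 1 = 0 \<and>
         (\<forall>mu gam d. d 1 1 = 0 \<longrightarrow>
            obj S m ns x sig2 alpha muhat ghat dhat \<le> obj S m ns x sig2 alpha mu gam d)"
proof (intro conjI allI impI)
  have S1: "S \<ge> 1" using hS by simp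
  show "dhat 1 1 = 0" unfolding dhat_def dprime_def using hD1 by simp
  fix mu :: "nat \<Rightarrow> real" and gam d :: "nat \<Rightarrow> nat \<Rightarrow> real" assume "d 1 1 = 0"
  have Chat: "Cf S m ns x sig2 dhat = 0"
    unfolding Cf_def
  proof (intro sum.neutral ballI)
    fix s assume s: "s \<in> {1..S}"
    have "ns s \<ge> 1" using hns s by auto
    then have "ebf m ns x sig2 dhat s = D s" unfolding ebf_def dhat_def by simp
    then show "(\<Sum>i=1..m. 1/sig2 i) * (\<Sum>j=1..ns s. (dhat s j - dprime m x sig2 s j - ebf m ns x sig2 dhat s)^2) = 0"
      unfolding dhat_def by simp
  qed
  define Dst where "Dst = (\<lambda>s. ebf m ns x sig2 d s - ebf m ns x sig2 d 1)"
  have hat_le: "(\<Sum>i=1..m. termf S m ns x sig2 alpha muhat ghat dhat i) \<le> Gfun S m ns x sig2 alpha D"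
    unfolding Gfun_def
  proof (rule sum_mono)
    fix i assume i: "i \<in> {1..m}"
    show "termf S m ns x sig2 alpha muhat ghat dhat i \<le> min (gfun S m ns x sig2 i D) (alpha i)"
      unfolding muhat_def ghat_def dhat_def n_def
      by (rule term_hat[OF S1 hns]) (use i hsig halpha hD1 in auto)
  qed
  have any_ge: "Gfun S m ns x sig2 alpha Dst \<le> (\<Sum>i=1..m. termf S m ns x sig2 alpha mu gam d i)"
    unfolding Gfun_def
  proof (rule sum_mono)
    fix i assume i: "i \<in> {1..m}"
    show "min (gfun S m ns x sig2 i Dst) (alpha i) \<le> termf S m ns x sig2 alpha mu gam d i"
      unfolding Dst_def
      by (rule term_lower[OF S1 hns]) (use i hsig halpha in auto)
  qed
  have "Gfun S m ns x sig2 alpha D \<le> Gfun S m ns x sig2 alpha Dst"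
    using hDmin Dst_def by simp
  moreover have "Cf S m ns x sig2 d \<ge> 0" using Cf_nonneg[OF hsig] .
  ultimately show "obj S m ns x sig2 alpha muhat ghat dhat \<le> obj S m ns x sig2 alpha mu gam d"
    unfolding objdecomp[OF S1 hm hns hsig] Chat using hat_le any_ge by linarith
qed

end
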